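(* Let $F\dashv G$ be a Galois connection between lattices $\mathcal{L}$ and $\mathcal{L}'$, and let $p:\mathcal{P}(I\times\mathcal{L})\to\mathcal{P}(O\times\mathcal{L})$ be a (partial) program. Then $\mathrm{MEF}^{F\dashv G}[p]$ is noninterfering.
   Context: A lattice means a partially ordered set $(\mathcal{L},\sqsubseteq)$ with least element $\bot$ in which any two elements have a least upper bound $\sqcup$; $\bigsqcup S$ denotes the least upper bound of a finite set ($\bigsqcup\emptyset=\bot$). A Galois connection $F\dashv G$ between $\mathcal{L}$ and $\mathcal{L}'$ is a pair $F:\mathcal{L}\to\mathcal{L}'$, $G:\mathcal{L}'\to\mathcal{L}$ with $F(\ell)\sqsubseteq_{\mathcal{L}'}\jmath\iff\ell\sqsubseteq_{\mathcal{L}}G(\jmath)$. For a function $H$ and set $S$, $H^*(S)=\{H(s):s\in S\}$. Labeled sets are finite subsets of $V\times\mathcal{L}$; write $a^\ell$ for $(a,\ell)$. For a labeled set $x$: $\mathcal{L}(x)=\{\ell : a^\ell\in x\}$; $x\downarrow\ell=\{a^\jmath\in x : \jmath\sqsubseteq\ell\}$; $x\sim_\ell y$ iff $x\downarrow\ell=y\downarrow\ell$; for $L\subseteq\mathcal{L}$, $x@L=\{a^\ell\in x : \ell\in L\}$. The closure set of finite $S$ is $C(S)=\{\bigsqcup S' : S'\subseteq S\}$ (computed in whichever lattice $S$ lives in); the up-set is $\ell\uparrow S=\{\jmath\in\mathcal{L} : \ell\sqsubseteq\jmath \text{ and } \forall\iota\in S.\ \iota\sqsubseteq\jmath\Rightarrow\iota\sqsubseteq\ell\}$.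 Define $C_{F\dashv G}(S)=G^*(C(F^*(S)))$ and $\mathrm{MEF}^{F\dashv G}[p](x)=\bigcup\{p(x\downarrow\ell)@(\ell\uparrow C_{F\dashv G}(\mathcal{L}(x))) : \ell\in C_{F\dashv G}(\mathcal{L}(x))\}$. A (partial) program $q:\mathcal{P}(I\times\mathcal{L})\to\mathcal{P}(O\times\mathcal{L})$ is noninterfering if for all $\ell\in\mathcal{L}$ and all $x,y$ with $x\sim_\ell y$ such that $q(x)$ and $q(y)$ are both defined, $q(x)\sim_\ell q(y)$. *)

theory Defs
  imports Main
begin

definition fjoin :: "'l::bounded_semilattice_sup_bot set \<Rightarrow> 'l" where
  "fjoin S = Finite_Set.fold sup bot S"

definition closure_set :: "'l::bounded_semilattice_sup_bot set \<Rightarrow> 'l set" where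
  "closure_set S = {fjoin S' | S'. S' \<subseteq> S}"

definition upset :: "'l::bounded_semilattice_sup_bot \<Rightarrow> 'l set \<Rightarrow> 'l set" where
  "upset l S = {j. l \<le> j \<and> (\<forall>i\<in>S. i \<le> j \<longrightarrow> i \<le> l)}"

definition galois_conn ::
  "('l::bounded_semilattice_sup_bot \<Rightarrow> 'm::bounded_semilattice_sup_bot) \<Rightarrow> ('m \<Rightarrow> 'l) \<Rightarrow> bool" where
  "galois_conn F G \<longleftrightarrow> (\<forall>l j. F l \<le> j \<longleftrightarrow> l \<le> G j)"

definition closure_FG ::
  "('l::bounded_semilattice_sup_bot \<Rightarrow> 'm::bounded_semilattice_sup_bot) \<Rightarrow> ('m \<Rightarrow> 'l) \<Rightarrow> 'l set \<Rightarrow> 'l set" where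
  "closure_FG F G S = G ` closure_set (F ` S)"

definition labels :: "('a \<times> 'l) set \<Rightarrow> 'l set" where
  "labels x = snd ` x"

definition down :: "('a \<times> 'l::order) set \<Rightarrow> 'l \<Rightarrow> ('a \<times> 'l) set" where
  "down x l = {(a, j). (a, j) \<in> x \<and> j \<le> l}"

definition restrict_at :: "('a \<times> 'l) set \<Rightarrow> 'l set \<Rightarrow> ('a \<times> 'l) set" where
  "restrict_at x L = {(a, j). (a, j) \<in> x \<and> j \<in> L}"

definition MEF ::
  "('l::bounded_semilattice_sup_bot \<Rightarrow> 'm::bounded_semilattice_sup_bot) \<Rightarrow> ('m \<Rightarrow> 'l)
   \<Rightarrow> (('i \<times> 'l) set \<Rightarrow> ('o \<times> 'l) set option) \<Rightarrow> ('i \<times> 'l) set \<Rightarrow> ('o \<times> 'l) set option" where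
  "MEF F G p x =
     (let Cs = closure_FG F G (labels x) in
      if (\<forall>l\<in>Cs. p (down x l) \<noteq> None)
      then Some (\<Union>l\<in>Cs. restrict_at (the (p (down x l))) (upset l Cs))
      else None)"

definition noninterfering ::
  "(('i \<times> 'l::bounded_semilattice_sup_bot) set \<Rightarrow> ('o \<times> 'l) set option) \<Rightarrow> bool" where
  "noninterfering q \<longleftrightarrow>
     (\<forall>l x y u v. finite x \<longrightarrow> finite y \<longrightarrow> down x l = down y l \<longrightarrow>
        q x = Some u \<longrightarrow> q y = Some v \<longrightarrow> down u l = down v l)"

end

theory Submission
  imports Defs
begin

lemma fjoin_upper:
  fixes S :: "'l::bounded_semilattice_sup_bot set"
  assumes "finite S" "a \<in> S" shows "a \<le> fjoin S"
  using assms
proof (induction S rule: finite_induct)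
  case empty then show ?case by simp
next
  case (insert b A)
  interpret comp_fun_idem "sup :: 'l \<Rightarrow> 'l \<Rightarrow> 'l" by (fact comp_fun_idem_sup)
  have eq: "fjoin (insert b A) = sup b (fjoin A)"
    unfolding fjoin_def using insert.hyps by (simp add: fold_insert_idem)
  show ?case using insert by (auto simp: eq intro: le_supI2)
qed

lemma labels_down: "labels (down x l) = {j \<in> labels x. j \<le> l}"
  unfolding labels_def down_def by force

lemma down_down: "k \<le> l \<Longrightarrow> down (down x l) k = down x k"
  unfolding down_def by auto

lemma closure_transfer:
  fixes F :: "'l::bounded_semilattice_sup_bot \<Rightarrow> 'm::bounded_semilattice_sup_bot"
  assumes gc: "galois_conn F G" and fx: "finite x"
    and eq: "down x l = down y l"
    and k: "k \<in> closure_FG F G (labels x)" and kl: "k \<le> l"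
  shows "k \<in> closure_FG F G (labels y)"
proof -
  obtain S' where S': "S' \<subseteq> F ` labels x" and kdef: "k = G (fjoin S')"
    using k unfolding closure_FG_def closure_set_def by auto
  have finS: "finite S'" using S' fx unfolding labels_def
    by (meson finite_imageI finite_subset)
  have "S' \<subseteq> F ` labels y"
  proof
    fix t assume t: "t \<in> S'"
    then obtain s where s: "s \<in> labels x" "t = F s" using S' by auto
    have "F s \<le> fjoin S'" using fjoin_upper[OF finS t] s by simp
    then have "s \<le> k" using gc kdef unfolding galois_conn_def by simp
    then have "s \<in> labels (down x l)" using s kl labels_down by fastforce
    then have "s \<in> labels y" using eq labels_down by (metis (no_types, lifting) mem_Collect_eq)
    then show "t \<in> F ` labels y" using s by simp
  qed
  then show ?thesis unfolding closure_FG_def closure_set_def kdef by auto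
qed

lemma half:
  fixes F :: "'l::bounded_semilattice_sup_bot \<Rightarrow> 'm::bounded_semilattice_sup_bot"
  assumes gc: "galois_conn F G" and fx: "finite x" and fy: "finite y"
    and eq: "down x l = down y l"
    and u: "MEF F G p x = Some u" and v: "MEF F G p y = Some v"
  shows "down u l \<subseteq> down v l"
proof
  fix z assume z: "z \<in> down u l"
  obtain o' j where zz: "z = (o', j)" by force
  define Cx where "Cx = closure_FG F G (labels x)"
  define Cy where "Cy = closure_FG F G (labels y)"
  have ux: "\<forall>k\<in>Cx. p (down x k) \<noteq> None"
    and udef: "u = (\<Union>k\<in>Cx. restrict_at (the (p (down x k))) (upset k Cx))"
    using u unfolding MEF_def Cx_def[symmetric] Let_def by (auto split: if_splits)
  have vy: "\<forall>k\<in>Cy. p (down y k) \<noteq> None"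
    and vdef: "v = (\<Union>k\<in>Cy. restrict_at (the (p (down y k))) (upset k Cy))"
    using v unfolding MEF_def Cy_def[symmetric] Let_def by (auto split: if_splits)
  have jl: "j \<le> l" and ou: "(o', j) \<in> u" using z zz unfolding down_def by auto
  then obtain k where k: "k \<in> Cx" and ok: "(o', j) \<in> the (p (down x k))"
    and jup: "j \<in> upset k Cx"
    using udef unfolding restrict_at_def by auto
  have kj: "k \<le> j" and kmax: "\<forall>i\<in>Cx. i \<le> j \<longrightarrow> i \<le> k" using jup unfolding upset_def by auto
  have kl: "k \<le> l" using kj jl by simp
  have kCy: "k \<in> Cy" using closure_transfer[OF gc fx eq] k kl Cx_def Cy_def by simp
  have dk: "down x k = down y k" using eq kl down_down by metis
  have "j \<in> upset k Cy"
    unfolding upset_def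
  proof (intro CollectI conjI ballI impI)
    show "k \<le> j" by fact
    fix i assume i: "i \<in> Cy" "i \<le> j"
    have "i \<in> Cx" using closure_transfer[OF gc fy eq[symmetric]] i jl Cx_def Cy_def
      by (meson order_trans)
    then show "i \<le> k" using kmax i by simp
  qed
  then have "(o', j) \<in> v" using vdef kCy ok dk unfolding restrict_at_def by auto
  then show "z \<in> down v l" using zz jl unfolding down_def by auto
qed

theorem mainTheorem9:
  fixes F :: "'l::bounded_semilattice_sup_bot \<Rightarrow> 'm::bounded_semilattice_sup_bot"
    and G :: "'m \<Rightarrow> 'l"
    and p :: "('i \<times> 'l) set \<Rightarrow> ('o \<times> 'l) set option"
  assumes "galois_conn F G"
  shows "noninterfering (MEF F G p)"
  unfolding noninterfering_def
proof (intro allI impI)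
  fix l x y u v
  assume "finite x" "finite y" "down x l = down y l"
    "MEF F G p x = Some u" "MEF F G p y = Some v"
  then show "down u l = down v l"
    using half[OF assms, of x y l p u v] half[OF assms, of y x l p v u]
    by (simp add: subset_antisym)
qed

end
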